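(* Let $G=(V,E)$ be a finite graph with $n=|V|\ge 1$. Let $\mathrm{PCE}(G)$ be the minimum size of an edge set $S\subseteq E$ such that $(V,E\setminus S)$ admits a perfect code. Then $$\mathrm{PCE}(G)\le(\mathrm{mac}(G)-1)\,n\le 2\,\mathrm{PCE}(G).$$
   Context: A dominating set of $G$ is a set $D\subseteq V$ with $N[D]=V$, where $N[v]$ is the closed neighborhood. A perfect code is a dominating set $D$ with $|N[v]\cap D|=1$ for all $v\in V$ (deleting all edges always yields a graph with a perfect code, namely $V$, so $\mathrm{PCE}(G)$ is well defined). The average congestion of $S\subseteq V$ is $\overline{\mathrm{cong}}(S)=\frac{1}{|V|}\sum_{v\in V}|N[v]\cap S|$, and $\mathrm{mac}(G)$ is the minimum of $\overline{\mathrm{cong}}(D)$ over all dominating sets $D$ of $G$. *)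

theory Defs
  imports Main Complex_Main
begin

definition graph :: "'a set \<Rightarrow> 'a set set \<Rightarrow> bool" where
  "graph V E \<longleftrightarrow> finite V \<and> (\<forall>e\<in>E. e \<subseteq> V \<and> card e = 2)"

definition cnbh :: "'a set \<Rightarrow> 'a set set \<Rightarrow> 'a \<Rightarrow> 'a set" where
  "cnbh V E v = {v} \<union> {u \<in> V. {u, v} \<in> E}"

definition dominating :: "'a set \<Rightarrow> 'a set set \<Rightarrow> 'a set \<Rightarrow> bool" where
  "dominating V E D \<longleftrightarrow> D \<subseteq> V \<and> (\<Union>v\<in>D. cnbh V E v) = V"

definition perfect_code :: "'a set \<Rightarrow> 'a set set \<Rightarrow> 'a set \<Rightarrow> bool" where
  "perfect_code V E D \<longleftrightarrow> dominating V E D \<and> (\<forall>v\<in>V. card (cnbh V E v \<inter> D) = 1)"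

definition avg_cong :: "'a set \<Rightarrow> 'a set set \<Rightarrow> 'a set \<Rightarrow> real" where
  "avg_cong V E S = (\<Sum>v\<in>V. real (card (cnbh V E v \<inter> S))) / real (card V)"

definition mac :: "'a set \<Rightarrow> 'a set set \<Rightarrow> real" where
  "mac V E = Min {avg_cong V E D | D. dominating V E D}"

definition PCE :: "'a set \<Rightarrow> 'a set set \<Rightarrow> nat" where
  "PCE V E = Min {card S | S. S \<subseteq> E \<and> (\<exists>D. perfect_code V (E - S) D)}"

end

theory Submission
  imports Defs
begin

lemma cnbh_fin: "finite V \<Longrightarrow> finite (cnbh V E v)"
  unfolding cnbh_def by auto

lemma cnbh_sub: "v \<in> V \<Longrightarrow> cnbh V E v \<subseteq> V"
  unfolding cnbh_def by auto

lemma UN_cnbh_sub: "D \<subseteq> V \<Longrightarrow> (\<Union>v\<in>D. cnbh V E v) \<subseteq> V"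
  unfolding cnbh_def by auto

lemma avg_mult:
  assumes "card V \<ge> 1"
  shows "avg_cong V E D * real (card V) = (\<Sum>v\<in>V. real (card (cnbh V E v \<inter> D)))"
  using assms unfolding avg_cong_def by auto

lemma fin_E: "graph V E \<Longrightarrow> finite E"
proof -
  assume g: "graph V E"
  hence "E \<subseteq> Pow V" unfolding graph_def by auto
  moreover have "finite (Pow V)" using g unfolding graph_def by auto
  ultimately show ?thesis using finite_subset by blast
qed

lemma PCE_set_fin: "graph V E \<Longrightarrow> finite {card S | S. S \<subseteq> E \<and> (\<exists>D. perfect_code V (E - S) D)}"
proof -
  assume g: "graph V E"
  have "{card S | S. S \<subseteq> E \<and> (\<exists>D. perfect_code V (E - S) D)} \<subseteq> card ` Pow E" by auto
  moreover have "finite (card ` Pow E)" using fin_E[OF g] by auto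
  ultimately show ?thesis by (rule finite_subset)
qed

lemma mac_set_fin: "graph V E \<Longrightarrow> finite {avg_cong V E D | D. dominating V E D}"
proof -
  assume g: "graph V E"
  have "{avg_cong V E D | D. dominating V E D} \<subseteq> avg_cong V E ` Pow V"
    unfolding dominating_def by auto
  moreover have "finite (avg_cong V E ` Pow V)" using g unfolding graph_def by auto
  ultimately show ?thesis by (rule finite_subset)
qed

lemma V_dom: "dominating V E V"
  unfolding dominating_def cnbh_def by auto

lemma pc_exists: "perfect_code V (E - E) V"
proof -
  have "\<And>v. cnbh V {} v = {v}" unfolding cnbh_def by auto
  thus ?thesis unfolding perfect_code_def dominating_def by auto
qed

lemma card_pairs:
  assumes g: "graph V E" and S: "S \<subseteq> E"
  shows "card (SIGMA v:V. {d \<in> V. {d, v} \<in> S}) \<le> 2 * card S"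
proof -
  have fS: "finite S" using fin_E[OF g] S finite_subset by blast
  have "(SIGMA v:V. {d \<in> V. {d, v} \<in> S}) \<subseteq> (\<Union>e\<in>S. (e \<times> e) - {p. fst p = snd p})"
  proof
    fix x assume "x \<in> (SIGMA v:V. {d \<in> V. {d, v} \<in> S})"
    then obtain v d where x: "x = (v,d)" "{d,v} \<in> S" by auto
    then have "card {d,v} = 2" using S g unfolding graph_def by auto
    then have "d \<noteq> v" by auto
    thus "x \<in> (\<Union>e\<in>S. (e \<times> e) - {p. fst p = snd p})" using x by auto
  qed
  hence "card (SIGMA v:V. {d \<in> V. {d, v} \<in> S}) \<le> card (\<Union>e\<in>S. (e \<times> e) - {p. fst p = snd p})"
  proof (rule card_mono[rotated])
    have "(\<Union>e\<in>S. (e \<times> e) - {p. fst p = snd p}) \<subseteq> V \<times> V"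
      using S g unfolding graph_def by blast
    moreover have "finite (V \<times> V)" using g unfolding graph_def by auto
    ultimately show "finite (\<Union>e\<in>S. (e \<times> e) - {p. fst p = snd p})" using finite_subset by blast
  qed
  also have "\<dots> \<le> (\<Sum>e\<in>S. card ((e \<times> e) - {p. fst p = snd p}))"
    by (rule card_UN_le[OF fS])
  also have "\<dots> = (\<Sum>e\<in>S. 2)"
  proof (rule sum.cong[OF refl])
    fix e assume "e \<in> S"
    then have "card e = 2" using S g unfolding graph_def by auto
    then obtain a b where "e = {a,b}" "a \<noteq> b" by (auto simp: card_2_iff)
    then have "(e \<times> e) - {p. fst p = snd p} = {(a,b),(b,a)}" by auto
    thus "card ((e \<times> e) - {p. fst p = snd p}) = 2" using \<open>a \<noteq> b\<close> by auto
  qed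
  finally show ?thesis by simp
qed

theorem mainTheorem4:
  fixes V :: "'a set" and E :: "'a set set"
  assumes "graph V E" and "card V \<ge> 1"
  shows "real (PCE V E) \<le> (mac V E - 1) * real (card V)
       \<and> (mac V E - 1) * real (card V) \<le> 2 * real (PCE V E)"
proof
  have g: "graph V E" by fact
  have fV: "finite V" using g unfolding graph_def by auto
  have n: "card V \<ge> 1" by fact
  have "mac V E \<in> {avg_cong V E D | D. dominating V E D}"
    unfolding mac_def using mac_set_fin[OF g] V_dom by (intro Min_in) auto
  then obtain D where dom: "dominating V E D" and macD: "mac V E = avg_cong V E D" by auto
  have DV: "D \<subseteq> V" using dom unfolding dominating_def by (simp only:)
  have ex: "\<forall>b\<in>V. \<exists>a. a \<in> cnbh V E b \<inter> D \<and> (b \<in> D \<longrightarrow> a = b)"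
  proof
    fix b assume b: "b \<in> V"
    show "\<exists>a. a \<in> cnbh V E b \<inter> D \<and> (b \<in> D \<longrightarrow> a = b)"
    proof (cases "b \<in> D")
      case True thus ?thesis unfolding cnbh_def by auto
    next
      case False
      from dom b obtain a where a: "a \<in> D" "b \<in> cnbh V E a" unfolding dominating_def by blast
      hence "{b,a} \<in> E" "a \<noteq> b" using False unfolding cnbh_def by auto
      hence "a \<in> cnbh V E b" using a DV unfolding cnbh_def by (auto simp: insert_commute)
      thus ?thesis using a False by auto
    qed
  qed
  then obtain q where q: "\<And>b. b \<in> V \<Longrightarrow> q b \<in> cnbh V E b \<inter> D \<and> (b \<in> D \<longrightarrow> q b = b)"
    by metis
  define Sg where "Sg = (SIGMA b:V. cnbh V E b \<inter> D - {q b})"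
  define S where "S = (\<lambda>(b,a). {a,b}) ` Sg"
  have SE: "S \<subseteq> E"
  proof
    fix e assume "e \<in> S"
    then obtain b a where ba: "e = {a,b}" "b \<in> V" "a \<in> cnbh V E b" "a \<in> D" "a \<noteq> q b"
      unfolding S_def Sg_def by auto
    have "a \<noteq> b" using ba q[of b] by auto
    thus "e \<in> E" using ba unfolding cnbh_def by auto
  qed
  have pc: "perfect_code V (E - S) D"
  proof -
    have key: "\<And>v. v \<in> V \<Longrightarrow> cnbh V (E - S) v \<inter> D = {q v}"
    proof -
      fix v assume v: "v \<in> V"
      have qin: "q v \<in> cnbh V (E - S) v"
      proof (cases "v \<in> D")
        case True thus ?thesis using q[OF v] unfolding cnbh_def by auto
      next
        case False
        have qv: "q v \<in> cnbh V E v" "q v \<in> D" using q[OF v] by auto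
        hence ne: "q v \<noteq> v" using False by auto
        hence inE: "{q v, v} \<in> E" using qv unfolding cnbh_def by auto
        have "{q v, v} \<notin> S"
        proof
          assume "{q v, v} \<in> S"
          then obtain b a where ba: "{q v, v} = {a,b}" "b \<in> V" "a \<in> cnbh V E b" "a \<in> D" "a \<noteq> q b"
            unfolding S_def Sg_def by auto
          have "a = q v \<and> b = v" using ba(1,4) False ne by (auto simp: doubleton_eq_iff)
          thus False using ba by auto
        qed
        thus ?thesis using inE qv DV unfolding cnbh_def by auto
      qed
      show "cnbh V (E - S) v \<inter> D = {q v}"
      proof
        show "{q v} \<subseteq> cnbh V (E - S) v \<inter> D" using qin q[OF v] by auto
        show "cnbh V (E - S) v \<inter> D \<subseteq> {q v}"
        proof
          fix a assume a: "a \<in> cnbh V (E - S) v \<inter> D"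
          show "a \<in> {q v}"
          proof (rule ccontr)
            assume nq: "a \<notin> {q v}"
            have "a \<noteq> v" using nq q[OF v] a by auto
            hence aE: "{a,v} \<in> E - S" "a \<in> V" using a unfolding cnbh_def by auto
            hence "a \<in> cnbh V E v" unfolding cnbh_def by auto
            hence "(v,a) \<in> Sg" using v a nq unfolding Sg_def by auto
            hence "{a,v} \<in> S" unfolding S_def by force
            thus False using aE by auto
          qed
        qed
      qed
    qed
    have "(\<Union>v\<in>D. cnbh V (E - S) v) = V"
    proof
      show "(\<Union>v\<in>D. cnbh V (E - S) v) \<subseteq> V" using DV by (rule UN_cnbh_sub)
      show "V \<subseteq> (\<Union>v\<in>D. cnbh V (E - S) v)"
      proof
        fix v assume v: "v \<in> V"
        have "q v \<in> cnbh V (E - S) v \<inter> D" using key[OF v] by auto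
        hence "q v \<in> D" "q v = v \<or> {q v, v} \<in> E - S" unfolding cnbh_def by auto
        hence "v \<in> cnbh V (E - S) (q v)" using v unfolding cnbh_def by (auto simp: insert_commute)
        thus "v \<in> (\<Union>v\<in>D. cnbh V (E - S) v)" using \<open>q v \<in> D\<close> by auto
      qed
    qed
    thus ?thesis using key DV unfolding perfect_code_def dominating_def by simp
  qed
  have "PCE V E \<le> card S"
    unfolding PCE_def using PCE_set_fin[OF g] SE pc by (intro Min_le) auto
  also have "card S \<le> card Sg" unfolding S_def using fV unfolding Sg_def
    by (intro card_image_le) (auto intro!: finite_SigmaI cnbh_fin)
  also have "card Sg = (\<Sum>b\<in>V. card (cnbh V E b \<inter> D - {q b}))"
    unfolding Sg_def using fV by (intro card_SigmaI) (auto intro!: cnbh_fin)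
  finally have "real (PCE V E) \<le> (\<Sum>b\<in>V. real (card (cnbh V E b \<inter> D - {q b})))"
    by (metis of_nat_le_iff of_nat_sum)
  also have "\<dots> = (\<Sum>b\<in>V. real (card (cnbh V E b \<inter> D)) - 1)"
  proof (rule sum.cong[OF refl])
    fix b assume b: "b \<in> V"
    have "q b \<in> cnbh V E b \<inter> D" using q[OF b] by auto
    moreover have "finite (cnbh V E b \<inter> D)" by (simp add: cnbh_fin[OF fV])
    ultimately have c1: "card (cnbh V E b \<inter> D) \<ge> 1" and c2: "card (cnbh V E b \<inter> D - {q b}) = card (cnbh V E b \<inter> D) - 1"
      by (metis card_0_eq empty_iff less_one not_le, simp add: card_Diff_singleton)
    show "real (card (cnbh V E b \<inter> D - {q b})) = real (card (cnbh V E b \<inter> D)) - 1"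
      using c1 c2 by (simp add: of_nat_diff)
  qed
  also have "\<dots> = (mac V E - 1) * real (card V)"
    using avg_mult[OF n, of E D] macD by (simp add: sum_subtractf algebra_simps)
  finally show "real (PCE V E) \<le> (mac V E - 1) * real (card V)" .
next
  have g: "graph V E" by fact
  have fV: "finite V" using g unfolding graph_def by auto
  have n: "card V \<ge> 1" by fact
  have "PCE V E \<in> {card S | S. S \<subseteq> E \<and> (\<exists>D. perfect_code V (E - S) D)}"
    unfolding PCE_def using PCE_set_fin[OF g] pc_exists by (intro Min_in) blast+
  then obtain S D where S: "S \<subseteq> E" "perfect_code V (E - S) D" "PCE V E = card S" by auto
  have DV: "D \<subseteq> V" using S(2) unfolding perfect_code_def dominating_def by (simp only:)
  have dom: "dominating V E D"
  proof -
    have "\<And>v. cnbh V (E - S) v \<subseteq> cnbh V E v" unfolding cnbh_def by auto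
    moreover have "(\<Union>v\<in>D. cnbh V E v) \<subseteq> V" using DV by (rule UN_cnbh_sub)
    ultimately show ?thesis using S(2) DV unfolding perfect_code_def dominating_def by blast
  qed
  have "mac V E \<le> avg_cong V E D"
    unfolding mac_def using mac_set_fin[OF g] dom by (intro Min_le) auto
  hence "mac V E * real (card V) \<le> (\<Sum>v\<in>V. real (card (cnbh V E v \<inter> D)))"
    using avg_mult[OF n, of E D] n by (metis mult_right_mono of_nat_0_le_iff)
  also have "\<dots> \<le> (\<Sum>v\<in>V. 1 + real (card {d \<in> V. {d, v} \<in> S}))"
  proof (rule sum_mono)
    fix v assume v: "v \<in> V"
    have "cnbh V E v \<inter> D \<subseteq> (cnbh V (E - S) v \<inter> D) \<union> {d \<in> V. {d, v} \<in> S}"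
      using DV unfolding cnbh_def by auto
    hence "card (cnbh V E v \<inter> D) \<le> card ((cnbh V (E - S) v \<inter> D) \<union> {d \<in> V. {d, v} \<in> S})"
      using fV by (intro card_mono) (auto intro: cnbh_fin)
    also have "\<dots> \<le> card (cnbh V (E - S) v \<inter> D) + card {d \<in> V. {d, v} \<in> S}"
      by (rule card_Un_le)
    also have "card (cnbh V (E - S) v \<inter> D) = 1" using S(2) v unfolding perfect_code_def by auto
    finally show "real (card (cnbh V E v \<inter> D)) \<le> 1 + real (card {d \<in> V. {d, v} \<in> S})" by simp
  qed
  also have "\<dots> = real (card V) + real (card (SIGMA v:V. {d \<in> V. {d, v} \<in> S}))"
    using fV by (simp add: sum.distrib card_SigmaI)
  also have "\<dots> \<le> real (card V) + 2 * real (card S)"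
    using card_pairs[OF g S(1)] by simp
  finally show "(mac V E - 1) * real (card V) \<le> 2 * real (PCE V E)"
    using S(3) by (simp add: algebra_simps)
qed

end
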